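(* Let $\mathfrak g$ be a finite-dimensional complex simple Lie algebra with dual Coxeter number $h^\vee$ and invariant form $\langle\cdot,\cdot\rangle$ normalized so that the Killing form equals $2h^\vee\langle\cdot,\cdot\rangle$; let $\{v^{(i)}\},\{w^{(i)}\}$ be dual bases of $\mathfrak g$ with respect to $\langle\cdot,\cdot\rangle$. Let $x\in\mathfrak g$ be nilpotent and $\kappa\ne -h^\vee$. Consider the Lie algebra with generators $a_m$ ($a\in\mathfrak g$ linear, $m\in\mathbb Z$) and relations $[a_m,b_n]=[a,b]_{m+n}+\delta_{m,-n}\kappa\langle [x,a]+ma,b\rangle$, and a module $M$ over it on which for every $v\in M$ and $a\in\mathfrak g$ we have $a_mv=0$ for $m\gg0$. Define on $M$ $$L_n=\frac{1}{2(\kappa+h^\vee)}\Big(\sum_i\sum_{m\in\mathbb Z}:v^{(i)}_m w^{(i)}_{n-m}:\;-\;\sum_i\big[[x,v^{(i)}],w^{(i)}\big]_n\Big),$$ where $:a_mb_k:=a_mb_k$ if $m<0$ and $:a_mb_k:=b_ka_m$ if $m\ge0$. Then for all $a\in\mathfrak g$ and $n\in\mathbb Z$, $$[L_{-1},a_n]=-n\,a_{n-1}-([x,a])_{n-1}.$$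
   Context: This is the twisted Sugawara operator for the $g$-twisted mode algebra of the affine vertex algebra at level $\kappa$ with $g=e^{-2\pi i x}$ (the case of trivial semisimple part $s=0$). *)

theory Defs
  imports Complex_Main "HOL-Library.Groups_Big_Fun"
begin

text \<open>Complex vector spaces are given by a scalar multiplication
  sG :: complex \<Rightarrow> 'g \<Rightarrow> 'g satisfying the library locale vector_space.\<close>

definition bilinear_form :: "(complex \<Rightarrow> 'g::ab_group_add \<Rightarrow> 'g) \<Rightarrow> ('g \<Rightarrow> 'g \<Rightarrow> complex) \<Rightarrow> bool" where
  "bilinear_form sG B \<longleftrightarrow>
     (\<forall>a. Vector_Spaces.linear sG (*) (\<lambda>b. B a b)) \<and> (\<forall>b. Vector_Spaces.linear sG (*) (\<lambda>a. B a b))"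

definition lie_algebra :: "(complex \<Rightarrow> 'g::ab_group_add \<Rightarrow> 'g) \<Rightarrow> ('g \<Rightarrow> 'g \<Rightarrow> 'g) \<Rightarrow> bool" where
  "lie_algebra sG br \<longleftrightarrow> vector_space sG \<and>
     (\<forall>a. Vector_Spaces.linear sG sG (br a)) \<and> (\<forall>b. Vector_Spaces.linear sG sG (\<lambda>a. br a b)) \<and>
     (\<forall>a. br a a = 0) \<and>
     (\<forall>a b c. br a (br b c) + br b (br c a) + br c (br a b) = 0)"

definition lie_ideal :: "(complex \<Rightarrow> 'g::ab_group_add \<Rightarrow> 'g) \<Rightarrow> ('g \<Rightarrow> 'g \<Rightarrow> 'g) \<Rightarrow> 'g set \<Rightarrow> bool" where
  "lie_ideal sG br I \<longleftrightarrow> module.subspace sG I \<and> (\<forall>a u. u \<in> I \<longrightarrow> br a u \<in> I)"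

definition finite_dim_space :: "(complex \<Rightarrow> 'g::ab_group_add \<Rightarrow> 'g) \<Rightarrow> bool" where
  "finite_dim_space sG \<longleftrightarrow> (\<exists>Bs. finite Bs \<and> module.independent sG Bs \<and> module.span sG Bs = UNIV)"

definition simple_lie_algebra :: "(complex \<Rightarrow> 'g::ab_group_add \<Rightarrow> 'g) \<Rightarrow> ('g \<Rightarrow> 'g \<Rightarrow> 'g) \<Rightarrow> bool" where
  "simple_lie_algebra sG br \<longleftrightarrow> lie_algebra sG br \<and> finite_dim_space sG \<and>
     (\<exists>a b. br a b \<noteq> 0) \<and> (\<forall>I. lie_ideal sG br I \<longrightarrow> I = {0} \<or> I = UNIV)"

definition lin_trace :: "(complex \<Rightarrow> 'g::ab_group_add \<Rightarrow> 'g) \<Rightarrow> ('g \<Rightarrow> 'g) \<Rightarrow> complex" where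
  "lin_trace sG T =
     (let Bs = (SOME Bs. finite Bs \<and> module.independent sG Bs \<and> module.span sG Bs = UNIV)
      in \<Sum>b\<in>Bs. module.representation sG Bs (T b) b)"

definition killing_form :: "(complex \<Rightarrow> 'g::ab_group_add \<Rightarrow> 'g) \<Rightarrow> ('g \<Rightarrow> 'g \<Rightarrow> 'g) \<Rightarrow> 'g \<Rightarrow> 'g \<Rightarrow> complex" where
  "killing_form sG br a b = lin_trace sG (\<lambda>u. br a (br b u))"

definition invariant_form :: "(complex \<Rightarrow> 'g::ab_group_add \<Rightarrow> 'g) \<Rightarrow> ('g \<Rightarrow> 'g \<Rightarrow> 'g) \<Rightarrow> ('g \<Rightarrow> 'g \<Rightarrow> complex) \<Rightarrow> bool" where
  "invariant_form sG br B \<longleftrightarrow> bilinear_form sG B \<and> (\<forall>a b. B a b = B b a) \<and>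
     (\<forall>a b c. B (br a b) c = B a (br b c)) \<and> (\<forall>a. (\<forall>b. B a b = 0) \<longrightarrow> a = 0)"

definition dual_bases :: "(complex \<Rightarrow> 'g::ab_group_add \<Rightarrow> 'g) \<Rightarrow> ('g \<Rightarrow> 'g \<Rightarrow> complex) \<Rightarrow> nat \<Rightarrow> (nat \<Rightarrow> 'g) \<Rightarrow> (nat \<Rightarrow> 'g) \<Rightarrow> bool" where
  "dual_bases sG B d v w \<longleftrightarrow>
     inj_on v {..<d} \<and> module.independent sG (v ` {..<d}) \<and> module.span sG (v ` {..<d}) = UNIV \<and>
     inj_on w {..<d} \<and> module.independent sG (w ` {..<d}) \<and> module.span sG (w ` {..<d}) = UNIV \<and>
     (\<forall>i<d. \<forall>j<d. B (v i) (w j) = (if i = j then 1 else 0))"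

definition ad_nilpotent :: "('g::zero \<Rightarrow> 'g \<Rightarrow> 'g) \<Rightarrow> 'g \<Rightarrow> bool" where
  "ad_nilpotent br x \<longleftrightarrow> (\<exists>k. \<forall>u. (br x ^^ k) u = 0)"

text \<open>A module over the g-twisted mode algebra: rho a m u is a_m acting on u,
  with [a_m,b_n] = [a,b]_{m+n} + delta_{m,-n} kappa <[x,a]+ma,b>,
  and a_m u = 0 for m large.\<close>
definition twisted_mode_module ::
  "(complex \<Rightarrow> 'g::ab_group_add \<Rightarrow> 'g) \<Rightarrow> ('g \<Rightarrow> 'g \<Rightarrow> 'g) \<Rightarrow> ('g \<Rightarrow> 'g \<Rightarrow> complex) \<Rightarrow> 'g \<Rightarrow> complex
   \<Rightarrow> (complex \<Rightarrow> 'm::ab_group_add \<Rightarrow> 'm) \<Rightarrow> ('g \<Rightarrow> int \<Rightarrow> 'm \<Rightarrow> 'm) \<Rightarrow> bool" where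
  "twisted_mode_module sG br B x \<kappa> sM \<rho> \<longleftrightarrow>
     vector_space sM \<and>
     (\<forall>a m. Vector_Spaces.linear sM sM (\<rho> a m)) \<and>
     (\<forall>m u. Vector_Spaces.linear sG sM (\<lambda>a. \<rho> a m u)) \<and>
     (\<forall>a b m n u. \<rho> a m (\<rho> b n u) - \<rho> b n (\<rho> a m u) =
        \<rho> (br a b) (m + n) u +
        sM (if m = - n then \<kappa> * B (br x a + sG (of_int m) a) b else 0) u) \<and>
     (\<forall>a u. \<exists>N. \<forall>m\<ge>N. \<rho> a m u = 0)"

definition nord :: "('g \<Rightarrow> int \<Rightarrow> 'm \<Rightarrow> 'm) \<Rightarrow> 'g \<Rightarrow> int \<Rightarrow> 'g \<Rightarrow> int \<Rightarrow> 'm \<Rightarrow> 'm" where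
  "nord \<rho> a m b k u = (if m < 0 then \<rho> a m (\<rho> b k u) else \<rho> b k (\<rho> a m u))"

text \<open>The twisted Sugawara operator L_n; the sum over m in Z is the finitely supported
  sum Sum_any (only finitely many terms are nonzero on a given vector).\<close>
definition sugawara ::
  "('g::ab_group_add \<Rightarrow> 'g \<Rightarrow> 'g) \<Rightarrow> 'g \<Rightarrow> complex \<Rightarrow> complex
   \<Rightarrow> (complex \<Rightarrow> 'm::ab_group_add \<Rightarrow> 'm) \<Rightarrow> ('g \<Rightarrow> int \<Rightarrow> 'm \<Rightarrow> 'm)
   \<Rightarrow> nat \<Rightarrow> (nat \<Rightarrow> 'g) \<Rightarrow> (nat \<Rightarrow> 'g) \<Rightarrow> int \<Rightarrow> 'm \<Rightarrow> 'm" where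
  "sugawara br x hv \<kappa> sM \<rho> d v w n u =
     sM (1 / (2 * (\<kappa> + hv)))
       ((\<Sum>i<d. Sum_any (\<lambda>m. nord \<rho> (v i) m (w i) (n - m) u))
        - (\<Sum>i<d. \<rho> (br (br x (v i)) (w i)) n u))"

end

theory Submission
  imports Defs
begin

definition fsupp :: "(int \<Rightarrow> 'a::zero) \<Rightarrow> bool" where
  "fsupp f \<longleftrightarrow> finite {m. f m \<noteq> 0}"

lemma fsupp_add: "fsupp f \<Longrightarrow> fsupp g \<Longrightarrow> fsupp (\<lambda>m. f m + (g m :: 'a::monoid_add))"
  unfolding fsupp_def by (rule finite_subset[of _ "{m. f m \<noteq> 0} \<union> {m. g m \<noteq> 0}"]) auto

lemma fsupp_diff: "fsupp f \<Longrightarrow> fsupp g \<Longrightarrow> fsupp (\<lambda>m. f m - (g m :: 'a::group_add))"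
  unfolding fsupp_def by (rule finite_subset[of _ "{m. f m \<noteq> 0} \<union> {m. g m \<noteq> 0}"]) auto

lemma fsupp_map: assumes "fsupp f" "L 0 = 0" shows "fsupp (\<lambda>m. L (f m))"
  using assms unfolding fsupp_def by (metis (mono_tags, lifting) finite_subset mem_Collect_eq subsetI)

lemma fsupp_sum: "(\<And>i. i \<in> I \<Longrightarrow> fsupp (f i)) \<Longrightarrow> fsupp (\<lambda>m. \<Sum>i\<in>I. (f i m :: 'a::comm_monoid_add))"
proof (induction I rule: infinite_finite_induct)
  case (infinite A) then show ?case by (simp add: fsupp_def)
next
  case empty then show ?case by (simp add: fsupp_def)
next
  case (insert i F) then show ?case by (simp add: fsupp_add)
qed

lemma fsupp_shift: "fsupp f \<Longrightarrow> fsupp (\<lambda>m. f (m + n))"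
proof -
  assume "fsupp f"
  then have "finite ((\<lambda>k. k - n) ` {k. f k \<noteq> 0})" unfolding fsupp_def by simp
  moreover have "{m. f (m + n) \<noteq> 0} = (\<lambda>k. k - n) ` {k. f k \<noteq> 0}"
    by (auto simp: image_iff intro!: exI[of _ "_ + n"])
  ultimately show ?thesis unfolding fsupp_def by simp
qed

lemma fsupp_bound: "(\<And>m. f m \<noteq> 0 \<Longrightarrow> lo \<le> m \<and> m \<le> hi) \<Longrightarrow> fsupp f"
  unfolding fsupp_def by (rule finite_subset[of _ "{lo..hi}"]) auto

lemma SA_add: "fsupp f \<Longrightarrow> fsupp g \<Longrightarrow> Sum_any (\<lambda>m. f m + g m) = Sum_any f + (Sum_any g :: 'a::comm_monoid_add)"
  unfolding fsupp_def by (rule Sum_any.distrib)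

lemma SA_expand: "finite S \<Longrightarrow> {m. f m \<noteq> 0} \<subseteq> S \<Longrightarrow> Sum_any f = sum f S"
  by (rule Sum_any.expand_superset)

lemma SA_map:
  assumes "fsupp f" and "additive L"
  shows "L (Sum_any f) = Sum_any (\<lambda>m. L (f m))"
proof -
  interpret additive L by fact
  let ?S = "{m. f m \<noteq> 0}"
  have fin: "finite ?S" using assms(1) unfolding fsupp_def .
  have "Sum_any f = sum f ?S" by (rule SA_expand[OF fin]) auto
  moreover have "Sum_any (\<lambda>m. L (f m)) = sum (\<lambda>m. L (f m)) ?S"
    by (rule SA_expand[OF fin]) (auto simp: zero)
  ultimately show ?thesis by (simp add: sum)
qed

lemma SA_diff:
  assumes "fsupp f" "fsupp g"
  shows "Sum_any (\<lambda>m. f m - g m) = Sum_any f - (Sum_any g :: 'a::ab_group_add)"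
proof -
  let ?S = "{m. f m \<noteq> 0} \<union> {m. g m \<noteq> 0}"
  have fin: "finite ?S" using assms unfolding fsupp_def by simp
  have "Sum_any f = sum f ?S" by (rule SA_expand[OF fin]) auto
  moreover have "Sum_any g = sum g ?S" by (rule SA_expand[OF fin]) auto
  moreover have "Sum_any (\<lambda>m. f m - g m) = sum (\<lambda>m. f m - g m) ?S" by (rule SA_expand[OF fin]) auto
  ultimately show ?thesis by (simp add: sum_subtractf)
qed

lemma SA_sum:
  assumes "finite I" "\<And>i. i \<in> I \<Longrightarrow> fsupp (f i)"
  shows "Sum_any (\<lambda>m. \<Sum>i\<in>I. f i m) = (\<Sum>i\<in>I. Sum_any (f i) :: 'a::comm_monoid_add)"
  using assms
proof (induction I rule: finite_induct)
  case empty then show ?case by simp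
next
  case (insert i F)
  have "Sum_any (\<lambda>m. \<Sum>i\<in>insert i F. f i m) = Sum_any (\<lambda>m. f i m + (\<Sum>i\<in>F. f i m))"
    using insert by simp
  also have "\<dots> = Sum_any (f i) + Sum_any (\<lambda>m. \<Sum>i\<in>F. f i m)"
    by (rule SA_add) (use insert in \<open>auto intro: fsupp_sum\<close>)
  finally show ?case using insert by simp
qed

lemma SA_shift: "Sum_any (\<lambda>m. f (m + n)) = Sum_any (f :: int \<Rightarrow> 'a::comm_monoid_add)"
proof -
  have "bij (\<lambda>m::int. m + n)" by (rule bijI) (auto simp: inj_def image_iff intro!: exI[of _ "_ - n"])
  then show ?thesis
    by (intro Sum_any.reindex_cong[symmetric]) (auto simp: o_def)
qed


locale tw =
  fixes sG :: "complex \<Rightarrow> 'g::ab_group_add \<Rightarrow> 'g"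
    and br :: "'g \<Rightarrow> 'g \<Rightarrow> 'g"
    and B :: "'g \<Rightarrow> 'g \<Rightarrow> complex"
    and hv :: complex
    and d :: nat and v w :: "nat \<Rightarrow> 'g"
    and x :: 'g and \<kappa> :: complex
    and sM :: "complex \<Rightarrow> 'm::ab_group_add \<Rightarrow> 'm"
    and \<rho> :: "'g \<Rightarrow> int \<Rightarrow> 'm \<Rightarrow> 'm"
  assumes VG: "vector_space sG" and VM: "vector_space sM"
    and brL: "\<And>a. Vector_Spaces.linear sG sG (br a)"
    and brR: "\<And>b. Vector_Spaces.linear sG sG (\<lambda>a. br a b)"
    and br_self: "\<And>a. br a a = 0"
    and BL: "\<And>a. Vector_Spaces.linear sG (*) (B a)"
    and BR: "\<And>b. Vector_Spaces.linear sG (*) (\<lambda>a. B a b)"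
    and Bsym: "\<And>a b. B a b = B b a"
    and Binv: "\<And>a b c. B (br a b) c = B a (br b c)"
    and Bnd: "\<And>a. (\<forall>b. B a b = 0) \<Longrightarrow> a = 0"
    and spanv: "module.span sG (v ` {..<d}) = UNIV"
    and spanw: "module.span sG (w ` {..<d}) = UNIV"
    and dual: "\<And>i j. i < d \<Longrightarrow> j < d \<Longrightarrow> B (v i) (w j) = (if i = j then 1 else 0)"
    and kill: "\<And>a b. killing_form sG br a b = 2 * hv * B a b"
    and fdim: "finite_dim_space sG"
    and kh: "\<kappa> + hv \<noteq> 0"
    and linM: "\<And>a m. Vector_Spaces.linear sM sM (\<rho> a m)"
    and linG: "\<And>m u. Vector_Spaces.linear sG sM (\<lambda>a. \<rho> a m u)"
    and rel: "\<And>a b m n u. \<rho> a m (\<rho> b n u) - \<rho> b n (\<rho> a m u) =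
        \<rho> (br a b) (m + n) u +
        sM (if m = - n then \<kappa> * B (br x a + sG (of_int m) a) b else 0) u"
    and fin: "\<And>a u. \<exists>N. \<forall>m\<ge>N. \<rho> a m u = 0"
begin

sublocale G: vector_space sG by (rule VG)
sublocale M: vector_space sM by (rule VM)

lemma brL_add: "br a (b + c) = br a b + br a c"
  and brL_scale: "br a (sG r b) = sG r (br a b)"
  and brL_sum: "br a (sum f S) = (\<Sum>i\<in>S. br a (f i))"
  and brL_neg: "br a (- b) = - br a b"
  and brL_diff: "br a (b - c) = br a b - br a c"
  and brL_0: "br a 0 = 0"
proof -
  interpret L: Vector_Spaces.linear sG sG "br a" by (rule brL)
  show "br a (b + c) = br a b + br a c" by (rule L.add)
  show "br a (sG r b) = sG r (br a b)" by (rule L.scale)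
  show "br a (sum f S) = (\<Sum>i\<in>S. br a (f i))" by (rule L.sum)
  show "br a (- b) = - br a b" by (rule L.neg)
  show "br a (b - c) = br a b - br a c" by (rule L.diff)
  show "br a 0 = 0" by (rule L.zero)
qed

lemma brR_add: "br (b + c) a = br b a + br c a"
  and brR_scale: "br (sG r b) a = sG r (br b a)"
  and brR_sum: "br (sum f S) a = (\<Sum>i\<in>S. br (f i) a)"
  and brR_neg: "br (- b) a = - br b a"
  and brR_diff: "br (b - c) a = br b a - br c a"
  and brR_0: "br 0 a = 0"
proof -
  interpret L: Vector_Spaces.linear sG sG "\<lambda>b. br b a" by (rule brR)
  show "br (b + c) a = br b a + br c a" by (rule L.add)
  show "br (sG r b) a = sG r (br b a)" by (rule L.scale)
  show "br (sum f S) a = (\<Sum>i\<in>S. br (f i) a)" by (rule L.sum)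
  show "br (- b) a = - br b a" by (rule L.neg)
  show "br (b - c) a = br b a - br c a" by (rule L.diff)
  show "br 0 a = 0" by (rule L.zero)
qed

lemma BL_add: "B a (b + c) = B a b + B a c"
  and BL_scale: "B a (sG r b) = r * (B a b)"
  and BL_sum: "B a (sum f S) = (\<Sum>i\<in>S. B a (f i))"
  and BL_neg: "B a (- b) = - B a b"
  and BL_diff: "B a (b - c) = B a b - B a c"
  and BL_0: "B a 0 = 0"
proof -
  interpret L: Vector_Spaces.linear sG "(*)" "B a" by (rule BL)
  show "B a (b + c) = B a b + B a c" by (rule L.add)
  show "B a (sG r b) = r * (B a b)" by (rule L.scale)
  show "B a (sum f S) = (\<Sum>i\<in>S. B a (f i))" by (rule L.sum)
  show "B a (- b) = - B a b" by (rule L.neg)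
  show "B a (b - c) = B a b - B a c" by (rule L.diff)
  show "B a 0 = 0" by (rule L.zero)
qed

lemma BR_add: "B (b + c) a = B b a + B c a"
  and BR_scale: "B (sG r b) a = r * (B b a)"
  and BR_sum: "B (sum f S) a = (\<Sum>i\<in>S. B (f i) a)"
  and BR_neg: "B (- b) a = - B b a"
  and BR_diff: "B (b - c) a = B b a - B c a"
  and BR_0: "B 0 a = 0"
proof -
  interpret L: Vector_Spaces.linear sG "(*)" "\<lambda>b. B b a" by (rule BR)
  show "B (b + c) a = B b a + B c a" by (rule L.add)
  show "B (sG r b) a = r * (B b a)" by (rule L.scale)
  show "B (sum f S) a = (\<Sum>i\<in>S. B (f i) a)" by (rule L.sum)
  show "B (- b) a = - B b a" by (rule L.neg)
  show "B (b - c) a = B b a - B c a" by (rule L.diff)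
  show "B 0 a = 0" by (rule L.zero)
qed

lemma rho_add: "\<rho> a m (u + u') = \<rho> a m u + \<rho> a m u'"
  and rho_scale: "\<rho> a m (sM r u) = sM r (\<rho> a m u)"
  and rho_sum: "\<rho> a m (sum f S) = (\<Sum>i\<in>S. \<rho> a m (f i))"
  and rho_neg: "\<rho> a m (- u) = - \<rho> a m u"
  and rho_diff: "\<rho> a m (u - u') = \<rho> a m u - \<rho> a m u'"
  and rho_0: "\<rho> a m 0 = 0"
proof -
  interpret L: Vector_Spaces.linear sM sM "\<rho> a m" by (rule linM)
  show "\<rho> a m (u + u') = \<rho> a m u + \<rho> a m u'" by (rule L.add)
  show "\<rho> a m (sM r u) = sM r (\<rho> a m u)" by (rule L.scale)
  show "\<rho> a m (sum f S) = (\<Sum>i\<in>S. \<rho> a m (f i))" by (rule L.sum)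
  show "\<rho> a m (- u) = - \<rho> a m u" by (rule L.neg)
  show "\<rho> a m (u - u') = \<rho> a m u - \<rho> a m u'" by (rule L.diff)
  show "\<rho> a m 0 = 0" by (rule L.zero)
qed

lemma rhoG_add: "\<rho> (a + b) m u = \<rho> a m u + \<rho> b m u"
  and rhoG_scale: "\<rho> (sG r a) m u = sM r (\<rho> a m u)"
  and rhoG_sum: "\<rho> (sum f S) m u = (\<Sum>i\<in>S. \<rho> (f i) m u)"
  and rhoG_neg: "\<rho> (- a) m u = - \<rho> a m u"
  and rhoG_diff: "\<rho> (a - b) m u = \<rho> a m u - \<rho> b m u"
  and rhoG_0: "\<rho> 0 m u = 0"
proof -
  interpret L: Vector_Spaces.linear sG sM "\<lambda>a. \<rho> a m u" by (rule linG)
  show "\<rho> (a + b) m u = \<rho> a m u + \<rho> b m u" by (rule L.add)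
  show "\<rho> (sG r a) m u = sM r (\<rho> a m u)" by (rule L.scale)
  show "\<rho> (sum f S) m u = (\<Sum>i\<in>S. \<rho> (f i) m u)" by (rule L.sum)
  show "\<rho> (- a) m u = - \<rho> a m u" by (rule L.neg)
  show "\<rho> (a - b) m u = \<rho> a m u - \<rho> b m u" by (rule L.diff)
  show "\<rho> 0 m u = 0" by (rule L.zero)
qed

lemma br_anti: "br b a = - br a b"
proof -
  have "br (a + b) (a + b) = (br a a + br b a) + (br a b + br b b)"
    by (simp only: brL_add brR_add)
  then have "br a b + br b a = 0" by (simp add: br_self add.commute)
  then show ?thesis using add_eq_0_iff by blast
qed

lemma sum_delta_d: "j < d \<Longrightarrow> (\<Sum>i<d. c i * (if i = j then 1 else 0)) = (c j :: complex)"
  by (simp add: if_distrib cong: if_cong)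

lemma expand_v: "y = (\<Sum>i<d. sG (B y (w i)) (v i))"
proof -
  define z where "z = y - (\<Sum>i<d. sG (B y (w i)) (v i))"
  have zw: "B z (w j) = 0" if "j < d" for j
    using that by (simp add: z_def BR_diff BR_sum BR_scale dual sum_delta_d)
  have "B z b = 0" for b
  proof -
    interpret L: Vector_Spaces.linear sG "(*)" "B z" by (rule BL)
    show ?thesis
      by (rule L.eq_0_on_span[of "w ` {..<d}"]) (auto simp: zw spanw)
  qed
  then have "z = 0" by (intro Bnd) auto
  then show ?thesis by (simp add: z_def)
qed

lemma expand_w: "y = (\<Sum>i<d. sG (B y (v i)) (w i))"
proof -
  define z where "z = y - (\<Sum>i<d. sG (B y (v i)) (w i))"
  have zw: "B z (v j) = 0" if "j < d" for j
  proof -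
    have h: "\<And>i. i < d \<Longrightarrow> B (w i) (v j) = (if i = j then 1 else 0)"
      using that by (simp add: Bsym[of "w _"] dual)
    have "(\<Sum>i<d. B y (v i) * B (w i) (v j)) = (\<Sum>i<d. B y (v i) * (if i = j then 1 else 0))"
      by (rule sum.cong) (auto simp: h)
    then show ?thesis using that by (simp add: z_def BR_diff BR_sum BR_scale sum_delta_d)
  qed
  have "B z b = 0" for b
  proof -
    interpret L: Vector_Spaces.linear sG "(*)" "B z" by (rule BL)
    show ?thesis
      by (rule L.eq_0_on_span[of "v ` {..<d}"]) (auto simp: zw spanv)
  qed
  then have "z = 0" by (intro Bnd) auto
  then show ?thesis by (simp add: z_def)
qed

lemma trace_formula:
  assumes TL: "Vector_Spaces.linear sG sG T"
  shows "lin_trace sG T = (\<Sum>i<d. B (T (v i)) (w i))"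
proof -
  interpret T: Vector_Spaces.linear sG sG T by (rule TL)
  define P where "P Bs \<longleftrightarrow> finite Bs \<and> G.independent Bs \<and> G.span Bs = UNIV" for Bs
  have ex: "\<exists>Bs. P Bs" using fdim unfolding finite_dim_space_def P_def by blast
  define Bs where "Bs = (SOME Bs. P Bs)"
  have PB: "P Bs" unfolding Bs_def using someI_ex[OF ex] .
  then have finB: "finite Bs" and indB: "G.independent Bs" and spB: "G.span Bs = UNIV"
    by (auto simp: P_def)
  have lt: "lin_trace sG T = (\<Sum>b\<in>Bs. G.representation Bs (T b) b)"
    unfolding lin_trace_def Let_def Bs_def P_def ..
  have Tb: "T b = (\<Sum>i<d. sG (B b (w i)) (T (v i)))" for b
    by (subst expand_v[of b]) (simp add: T.sum T.scale)
  have rep: "G.representation Bs (T b) b = (\<Sum>i<d. B b (w i) * G.representation Bs (T (v i)) b)" for b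
    unfolding Tb[of b]
    by (simp add: G.representation_sum[OF indB] spB G.representation_scale[OF indB])
  have "lin_trace sG T = (\<Sum>b\<in>Bs. \<Sum>i<d. B b (w i) * G.representation Bs (T (v i)) b)"
    unfolding lt rep ..
  also have "\<dots> = (\<Sum>i<d. \<Sum>b\<in>Bs. G.representation Bs (T (v i)) b * B b (w i))"
    by (subst sum.swap) (simp add: mult.commute)
  also have "\<dots> = (\<Sum>i<d. B (\<Sum>b\<in>Bs. sG (G.representation Bs (T (v i)) b) b) (w i))"
    by (simp add: BR_sum BR_scale)
  also have "\<dots> = (\<Sum>i<d. B (T (v i)) (w i))"
    by (simp add: G.sum_representation_eq[OF indB _ finB] spB)
  finally show ?thesis .
qed

lemma casimir: "(\<Sum>i<d. br (br b (v i)) (w i)) = sG (2 * hv) b"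
proof -
  have "B a (\<Sum>i<d. br (br b (v i)) (w i)) = B a (sG (2 * hv) b)" for a
  proof -
    have lin: "Vector_Spaces.linear sG sG (\<lambda>u. br a (br b u))"
      using Vector_Spaces.linear_compose[OF brL[of b] brL[of a]] by (simp add: o_def)
    have "B a (sG (2 * hv) b) = killing_form sG br a b" by (simp add: kill BL_scale)
    also have "\<dots> = (\<Sum>i<d. B (br a (br b (v i))) (w i))"
      unfolding killing_form_def by (rule trace_formula[OF lin])
    also have "\<dots> = B a (\<Sum>i<d. br (br b (v i)) (w i))"
      by (simp add: Binv BL_sum)
    finally show ?thesis by simp
  qed
  note h = this
  have "\<forall>a. B ((\<Sum>i<d. br (br b (v i)) (w i)) - sG (2 * hv) b) a = 0"
  proof
    fix a
    have "B (\<Sum>i<d. br (br b (v i)) (w i)) a = B (sG (2 * hv) b) a"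
      using h[of a] by (simp only: Bsym[of _ a])
    then show "B ((\<Sum>i<d. br (br b (v i)) (w i)) - sG (2 * hv) b) a = 0"
      by (simp add: BR_diff)
  qed
  then show ?thesis using Bnd by fastforce
qed

lemma casimir2: "(\<Sum>i<d. br (br (v i) a) (w i)) = sG (- 2 * hv) a"
proof -
  have "(\<Sum>i<d. br (br (v i) a) (w i)) = - (\<Sum>i<d. br (br a (v i)) (w i))"
    by (simp add: br_anti[of "v _" a] brR_neg sum_negf)
  also have "\<dots> = sG (- 2 * hv) a" by (simp add: casimir)
  finally show ?thesis .
qed

lemma B_twist: "B (br x q + sG c q) a = B (sG c a - br x a) q"
proof -
  have "B (br x q) a = B x (br q a)" by (rule Binv)
  also have "\<dots> = - B x (br a q)" by (simp add: br_anti[of q a] BL_neg)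
  also have "\<dots> = - B (br x a) q" by (simp add: Binv)
  finally have 1: "B (br x q) a = - B (br x a) q" .
  show ?thesis by (simp add: BR_add BR_scale BR_diff 1 Bsym[of q a])
qed


lemma relo: "\<rho> a m (\<rho> b n u) = \<rho> b n (\<rho> a m u) + \<rho> (br a b) (m + n) u +
        sM (if m = - n then \<kappa> * B (br x a + sG (of_int m) a) b else 0) u"
  using rel[of a m b n u] by (simp add: diff_eq_eq add.assoc)

lemma ubound: "\<exists>N. \<forall>p m. N \<le> m \<longrightarrow> \<rho> p m u = 0"
proof -
  have "\<forall>i. \<exists>N. \<forall>m\<ge>N. \<rho> (v i) m u = 0" using fin by blast
  then obtain Nf where Nf: "\<And>i m. m \<ge> Nf i \<Longrightarrow> \<rho> (v i) m u = 0" by metis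
  define N where "N = (\<Sum>i<d. \<bar>Nf i\<bar>)"
  have le: "Nf i \<le> N" if "i < d" for i
  proof -
    have "\<bar>Nf i\<bar> \<le> N" unfolding N_def
      by (rule member_le_sum[of i "{..<d}" "\<lambda>i. \<bar>Nf i\<bar>"]) (use that in auto)
    then show ?thesis by simp
  qed
  have "\<rho> p m u = 0" if "N \<le> m" for p m
  proof -
    interpret L: Vector_Spaces.linear sG sM "\<lambda>a. \<rho> a m u" by (rule linG)
    show ?thesis
      by (rule L.eq_0_on_span[of "v ` {..<d}"]) (auto simp: spanv intro!: Nf order_trans[OF le that])
  qed
  then show ?thesis by blast
qed

lemma fsupp_gn: "fsupp (\<lambda>k. if k < t then \<rho> P k (\<rho> q (c - k) u) else \<rho> q (c - k) (\<rho> P k u))"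
proof -
  obtain N where N: "\<And>p m. N \<le> m \<Longrightarrow> \<rho> p m u = 0" using ubound[of u] by blast
  show ?thesis
  proof (rule fsupp_bound[where lo = "min (c - N) t" and hi = "max N t"])
    fix k assume nz: "(if k < t then \<rho> P k (\<rho> q (c - k) u) else \<rho> q (c - k) (\<rho> P k u)) \<noteq> 0"
    show "min (c - N) t \<le> k \<and> k \<le> max N t"
    proof (cases "k < t")
      case True
      with nz have "\<rho> q (c - k) u \<noteq> 0" by (auto simp: rho_0)
      then have "c - k < N" using N not_le by blast
      with True show ?thesis by simp
    next
      case False
      with nz have "\<rho> P k u \<noteq> 0" by (auto simp: rho_0)
      then have "k < N" using N not_le by blast
      with False show ?thesis by simp
    qed
  qed
qed

lemma fsupp_nord: "fsupp (\<lambda>m. nord \<rho> p m q (c - m) u)"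
  using fsupp_gn[of 0 p q c u] by (simp add: nord_def)

lemma PW:
  "nord \<rho> p m q (-1 - m) (\<rho> a n u) - \<rho> a n (nord \<rho> p m q (-1 - m) u) =
   nord \<rho> p m (br q a) (n - 1 - m) u
   + (if m < 0 then \<rho> (br p a) (m + n) (\<rho> q (-1 - m) u) else \<rho> q (-1 - m) (\<rho> (br p a) (m + n) u))
   + sM (if -1 - m = -n then \<kappa> * B (br x q + sG (of_int (-1 - m)) q) a else 0) (\<rho> p m u)
   + sM (if m = -n then \<kappa> * B (br x p + sG (of_int m) p) a else 0) (\<rho> q (-1 - m) u)"
proof -
  have idx: "-1 - m + n = n - 1 - m" by simp
  show ?thesis
  proof (cases "m < 0")
    case True
    show ?thesis using True relo[of q "-1 - m" a n u] relo[of p m a n "\<rho> q (-1 - m) u"]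
      by (simp add: nord_def rho_add rho_scale idx)
  next
    case False
    show ?thesis using False relo[of p m a n u] relo[of q "-1 - m" a n "\<rho> p m u"]
      by (simp add: nord_def rho_add rho_scale idx)
  qed
qed

lemma CORR:
  "Sum_any (\<lambda>k. (if k < n then \<rho> P k (\<rho> q (n - 1 - k) u) else \<rho> q (n - 1 - k) (\<rho> P k u))
      - nord \<rho> P k q (n - 1 - k) u)
   = sM (of_int n) (\<rho> (br P q) (n - 1) u) + (if n = 1 then sM (\<kappa> * B (br x P) q) u else 0)"
proof -
  define Z where "Z = \<rho> (br P q) (n - 1) u"
  define H where "H k = \<rho> P k (\<rho> q (n - 1 - k) u) - \<rho> q (n - 1 - k) (\<rho> P k u)" for k
  have H: "H k = Z + sM (if n = 1 then \<kappa> * B (br x P + sG (of_int k) P) q else 0) u" for k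
  proof -
    have e: "(k = - (n - 1 - k)) \<longleftrightarrow> n = 1" by auto
    show ?thesis unfolding H_def Z_def rel[of P k q "n - 1 - k" u] e by simp
  qed
  have f: "(if k < n then \<rho> P k (\<rho> q (n - 1 - k) u) else \<rho> q (n - 1 - k) (\<rho> P k u))
      - nord \<rho> P k q (n - 1 - k) u
     = (if 0 \<le> k \<and> k < n then H k else if n \<le> k \<and> k < 0 then - H k else 0)" for k
    unfolding nord_def H_def by auto
  have main: "Sum_any (\<lambda>k. (if k < n then \<rho> P k (\<rho> q (n - 1 - k) u) else \<rho> q (n - 1 - k) (\<rho> P k u))
      - nord \<rho> P k q (n - 1 - k) u)
     = Sum_any (\<lambda>k. (if 0 \<le> k \<and> k < n then H k else if n \<le> k \<and> k < 0 then - H k else 0))"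
    by (rule Sum_any.cong) (rule f)
  show ?thesis
  proof (cases "n \<ge> 1")
    case True
    have "Sum_any (\<lambda>k. (if 0 \<le> k \<and> k < n then H k else if n \<le> k \<and> k < 0 then - H k else 0))
        = Sum_any (\<lambda>k. if k \<in> {0..<n} then H k else 0)"
      using True by (intro Sum_any.cong) auto
    also have "\<dots> = sum H {0..<n}" by (rule Sum_any.conditionalize[symmetric]) simp
    finally have S: "Sum_any (\<lambda>k. (if 0 \<le> k \<and> k < n then H k else if n \<le> k \<and> k < 0 then - H k else 0)) = sum H {0..<n}" .
    show ?thesis
    proof (cases "n = 1")
      case True
      then have "{0..<n} = {0}" by auto
      then show ?thesis apply (simp only: main S) using True by (simp add: H Z_def)
    next
      case False
      have "sum H {0..<n} = sum (\<lambda>k. Z) {0..<n}" using False by (simp add: H)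
      also have "\<dots> = sM (of_nat (nat n)) Z" by (simp add: M.sum_constant_scale)
      also have "of_nat (nat n) = (of_int n :: complex)" using True by simp
      finally show ?thesis apply (simp only: main S) using False by (simp add: Z_def)
    qed
  next
    case False
    have "Sum_any (\<lambda>k. (if 0 \<le> k \<and> k < n then H k else if n \<le> k \<and> k < 0 then - H k else 0))
        = Sum_any (\<lambda>k. if k \<in> {n..<0} then - H k else 0)"
      using False by (intro Sum_any.cong) auto
    also have "\<dots> = sum (\<lambda>k. - H k) {n..<0}" by (rule Sum_any.conditionalize[symmetric]) simp
    also have "\<dots> = sum (\<lambda>k. - Z) {n..<0}" using False by (simp add: H)
    also have "\<dots> = sM (of_nat (nat (- n))) (- Z)" by (simp add: M.sum_constant_scale)
    also have "\<dots> = sM (of_int n) Z"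
    proof -
      have "of_nat (nat (- n)) = (- of_int n :: complex)" using False by simp
      then show ?thesis by simp
    qed
    finally show ?thesis apply (simp only: main) using False by (simp add: Z_def)
  qed
qed

lemma additive_rho: "additive (\<rho> a n)"
  by (simp add: additive_def rho_add)

lemma additive_sM: "additive (sM c)"
  by (simp add: additive_def M.scale_right_distrib)

lemma stepA:
  "Sum_any (\<lambda>m. nord \<rho> p m q (-1 - m) (\<rho> a n u)) - \<rho> a n (Sum_any (\<lambda>m. nord \<rho> p m q (-1 - m) u))
   = Sum_any (\<lambda>m. nord \<rho> p m (br q a) (n - 1 - m) u) + Sum_any (\<lambda>m. nord \<rho> (br p a) m q (n - 1 - m) u)
   + sM (of_int n) (\<rho> (br (br p a) q) (n - 1) u) + (if n = 1 then sM (\<kappa> * B (br x (br p a)) q) u else 0)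
   + sM (\<kappa> * B (br x q + sG (of_int (-n)) q) a) (\<rho> p (n - 1) u)
   + sM (\<kappa> * B (br x p + sG (of_int (-n)) p) a) (\<rho> q (n - 1) u)"
proof -
  define f1 where "f1 m = nord \<rho> p m q (-1 - m) (\<rho> a n u)" for m
  define f2 where "f2 m = nord \<rho> p m q (-1 - m) u" for m
  define N1 where "N1 m = nord \<rho> p m (br q a) (n - 1 - m) u" for m
  define G where "G m = nord \<rho> (br p a) m q (n - 1 - m) u" for m
  define F where "F k = (if k < n then \<rho> (br p a) k (\<rho> q (n - 1 - k) u) else \<rho> q (n - 1 - k) (\<rho> (br p a) k u))" for k
  define E where "E m = (if m < 0 then \<rho> (br p a) (m + n) (\<rho> q (-1 - m) u) else \<rho> q (-1 - m) (\<rho> (br p a) (m + n) u))" for m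
  define K1 where "K1 = sM (\<kappa> * B (br x q + sG (of_int (-n)) q) a) (\<rho> p (n - 1) u)"
  define K2 where "K2 = sM (\<kappa> * B (br x p + sG (of_int (-n)) p) a) (\<rho> q (n - 1) u)"
  define C1 where "C1 m = (if m = n - 1 then K1 else 0)" for m
  define C2 where "C2 m = (if m = - n then K2 else 0)" for m
  have fs1: "fsupp f1" unfolding f1_def by (rule fsupp_nord)
  have fs2: "fsupp f2" unfolding f2_def by (rule fsupp_nord)
  have fsN1: "fsupp N1" unfolding N1_def by (rule fsupp_nord)
  have fsG: "fsupp G" unfolding G_def by (rule fsupp_nord)
  have fsF: "fsupp F" unfolding F_def by (rule fsupp_gn)
  have EF: "E m = F (m + n)" for m unfolding E_def F_def by simp
  have fsE: "fsupp E" unfolding EF by (rule fsupp_shift[OF fsF])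
  have fsC1: "fsupp C1" unfolding C1_def by (rule fsupp_bound[of _ "n - 1" "n - 1"]) (auto split: if_splits)
  have fsC2: "fsupp C2" unfolding C2_def by (rule fsupp_bound[of _ "- n" "- n"]) (auto split: if_splits)
  have fs2': "fsupp (\<lambda>m. \<rho> a n (f2 m))" by (rule fsupp_map[OF fs2]) (simp add: rho_0)
  have pw: "f1 m - \<rho> a n (f2 m) = N1 m + E m + C1 m + C2 m" for m
  proof -
    have c1: "sM (if -1 - m = -n then \<kappa> * B (br x q + sG (of_int (-1 - m)) q) a else 0) (\<rho> p m u) = C1 m"
      unfolding C1_def K1_def by (cases "m = n - 1") auto
    have c2: "sM (if m = -n then \<kappa> * B (br x p + sG (of_int m) p) a else 0) (\<rho> q (-1 - m) u) = C2 m"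
      unfolding C2_def K2_def by (cases "m = - n") auto
    show ?thesis unfolding f1_def f2_def N1_def E_def using PW[of p m q a n u] by (simp only: c1 c2)
  qed
  have "Sum_any f1 - \<rho> a n (Sum_any f2) = Sum_any (\<lambda>m. f1 m - \<rho> a n (f2 m))"
    by (simp add: SA_map[OF fs2 additive_rho] SA_diff[OF fs1 fs2'])
  also have "\<dots> = Sum_any (\<lambda>m. N1 m + E m + C1 m + C2 m)" by (simp only: pw)
  also have "\<dots> = Sum_any N1 + Sum_any E + Sum_any C1 + Sum_any C2"
    by (simp add: SA_add fsupp_add fsN1 fsE fsC1 fsC2)
  also have "Sum_any C1 = K1" unfolding C1_def by simp
  also have "Sum_any C2 = K2" unfolding C2_def by simp
  also have "Sum_any E = Sum_any F" unfolding EF by (rule SA_shift)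
  also have "Sum_any F = Sum_any G + (Sum_any F - Sum_any G)" by simp
  also have "Sum_any F - Sum_any G = Sum_any (\<lambda>k. F k - G k)" by (rule SA_diff[OF fsF fsG, symmetric])
  also have "\<dots> = sM (of_int n) (\<rho> (br (br p a) q) (n - 1) u) + (if n = 1 then sM (\<kappa> * B (br x (br p a)) q) u else 0)"
    unfolding F_def G_def by (rule CORR)
  finally show ?thesis unfolding f1_def f2_def N1_def G_def K1_def K2_def by (simp add: add.assoc)
qed

lemma invariance:
  assumes f1: "\<And>q. Vector_Spaces.linear sG sM (\<lambda>p. f p q)"
    and f2: "\<And>p. Vector_Spaces.linear sG sM (f p)"
  shows "(\<Sum>i<d. f (v i) (br (w i) a)) + (\<Sum>i<d. f (br (v i) a) (w i)) = 0"
proof -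
  have lin1: "f (\<Sum>j\<in>J. sG (c j) (g j)) q = (\<Sum>j\<in>J. sM (c j) (f (g j) q))" for J c g q
  proof -
    interpret L: Vector_Spaces.linear sG sM "\<lambda>p. f p q" by (rule f1)
    show ?thesis by (simp add: L.sum L.scale)
  qed
  have lin2: "f p (\<Sum>j\<in>J. sG (c j) (g j)) = (\<Sum>j\<in>J. sM (c j) (f p (g j)))" for J c g p
  proof -
    interpret L: Vector_Spaces.linear sG sM "f p" by (rule f2)
    show ?thesis by (simp add: L.sum L.scale)
  qed
  have neg2: "f p (- y) = - f p y" for p y
  proof -
    interpret L: Vector_Spaces.linear sG sM "f p" by (rule f2)
    show ?thesis by (rule L.neg)
  qed
  have e2: "(\<Sum>i<d. sG (B (br (v i) a) (w j)) (w i)) = - br (w j) a" for j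
  proof -
    have c: "B (br (w j) a) (v i) = - B (br (v i) a) (w j)" for i
    proof -
      have "B (br (w j) a) (v i) = B (w j) (br a (v i))" by (rule Binv)
      also have "\<dots> = - B (w j) (br (v i) a)" by (simp add: br_anti[of a "v i"] BL_neg)
      also have "\<dots> = - B (br (v i) a) (w j)" by (simp add: Bsym[of "w j"])
      finally show ?thesis .
    qed
    have "br (w j) a = (\<Sum>i<d. sG (B (br (w j) a) (v i)) (w i))" by (rule expand_w)
    also have "\<dots> = - (\<Sum>i<d. sG (B (br (v i) a) (w j)) (w i))"
      by (simp add: c sum_negf)
    finally show ?thesis by simp
  qed
  have "(\<Sum>i<d. f (br (v i) a) (w i)) = (\<Sum>i<d. \<Sum>j<d. sM (B (br (v i) a) (w j)) (f (v j) (w i)))"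
    by (subst expand_v[of "br (v _) a"]) (simp add: lin1)
  also have "\<dots> = (\<Sum>j<d. \<Sum>i<d. sM (B (br (v i) a) (w j)) (f (v j) (w i)))"
    by (rule sum.swap)
  also have "\<dots> = (\<Sum>j<d. f (v j) (\<Sum>i<d. sG (B (br (v i) a) (w j)) (w i)))"
    by (simp add: lin2)
  also have "\<dots> = - (\<Sum>j<d. f (v j) (br (w j) a))"
    by (simp add: e2 neg2 sum_negf)
  finally show ?thesis by simp
qed

lemma lin_nord1: "Vector_Spaces.linear sG sM (\<lambda>p. nord \<rho> p m q k u)"
proof (cases "m < 0")
  case True
  then show ?thesis unfolding nord_def using linG by simp
next
  case False
  then show ?thesis unfolding nord_def
    using Vector_Spaces.linear_compose[OF linG[of m u] linM[of q k]] by (simp add: o_def)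
qed

lemma lin_nord2: "Vector_Spaces.linear sG sM (\<lambda>q. nord \<rho> p m q k u)"
proof (cases "m < 0")
  case True
  then show ?thesis unfolding nord_def
    using Vector_Spaces.linear_compose[OF linG[of k u] linM[of p m]] by (simp add: o_def)
next
  case False
  then show ?thesis unfolding nord_def using linG by simp
qed

lemma stepB:
  "(\<Sum>i<d. Sum_any (\<lambda>m. nord \<rho> (v i) m (br (w i) a) (c - m) u))
   + (\<Sum>i<d. Sum_any (\<lambda>m. nord \<rho> (br (v i) a) m (w i) (c - m) u)) = 0"
proof -
  have "(\<Sum>i<d. Sum_any (\<lambda>m. nord \<rho> (v i) m (br (w i) a) (c - m) u))
     + (\<Sum>i<d. Sum_any (\<lambda>m. nord \<rho> (br (v i) a) m (w i) (c - m) u))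
     = Sum_any (\<lambda>m. \<Sum>i<d. nord \<rho> (v i) m (br (w i) a) (c - m) u)
     + Sum_any (\<lambda>m. \<Sum>i<d. nord \<rho> (br (v i) a) m (w i) (c - m) u)"
    by (simp add: SA_sum fsupp_nord)
  also have "\<dots> = Sum_any (\<lambda>m. (\<Sum>i<d. nord \<rho> (v i) m (br (w i) a) (c - m) u)
     + (\<Sum>i<d. nord \<rho> (br (v i) a) m (w i) (c - m) u))"
    by (rule SA_add[symmetric]) (simp_all add: fsupp_sum fsupp_nord)
  also have "\<dots> = Sum_any (\<lambda>m::int. 0)"
  proof -
    have pw: "(\<Sum>i<d. nord \<rho> (v i) m (br (w i) a) (c - m) u)
     + (\<Sum>i<d. nord \<rho> (br (v i) a) m (w i) (c - m) u) = 0" for m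
      using invariance[of "\<lambda>p q. nord \<rho> p m q (c - m) u", OF lin_nord1 lin_nord2] by simp
    show ?thesis by (simp only: pw)
  qed
  finally show ?thesis by simp
qed

lemma stepC1:
  "(\<Sum>i<d. sM (of_int n) (\<rho> (br (br (v i) a) (w i)) (n - 1) u))
   = sM (of_int n * (- 2 * hv)) (\<rho> a (n - 1) u)"
proof -
  have "(\<Sum>i<d. sM (of_int n) (\<rho> (br (br (v i) a) (w i)) (n - 1) u))
      = sM (of_int n) (\<rho> (\<Sum>i<d. br (br (v i) a) (w i)) (n - 1) u)"
    by (simp add: rhoG_sum M.scale_sum_right)
  also have "\<dots> = sM (of_int n * (- 2 * hv)) (\<rho> a (n - 1) u)"
    by (simp add: casimir2 rhoG_scale rhoG_neg)
  finally show ?thesis .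
qed

lemma stepC2:
  "(\<Sum>i<d. (if n = 1 then sM (\<kappa> * B (br x (br (v i) a)) (w i)) u else 0))
   = (if n = 1 then sM (\<kappa> * (- 2 * hv) * B x a) u else 0)"
proof (cases "n = 1")
  case True
  have "(\<Sum>i<d. \<kappa> * B (br x (br (v i) a)) (w i)) = \<kappa> * B x (\<Sum>i<d. br (br (v i) a) (w i))"
    by (simp add: Binv BL_sum sum_distrib_left)
  also have "\<dots> = \<kappa> * (- 2 * hv) * B x a" by (simp add: casimir2 BL_scale BL_neg)
  finally have "(\<Sum>i<d. \<kappa> * B (br x (br (v i) a)) (w i)) = \<kappa> * (- 2 * hv) * B x a" .
  then show ?thesis using True by (simp add: M.scale_sum_left[symmetric])
qed simp

lemma stepC3:
  "(\<Sum>i<d. sM (\<kappa> * B (br x (w i) + sG c (w i)) a) (\<rho> (v i) k u))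
   = \<rho> (sG \<kappa> (sG c a - br x a)) k u"
proof -
  define y where "y = sG c a - br x a"
  have "(\<Sum>i<d. sM (\<kappa> * B (br x (w i) + sG c (w i)) a) (\<rho> (v i) k u))
      = (\<Sum>i<d. sM (\<kappa> * B y (w i)) (\<rho> (v i) k u))"
    by (simp add: B_twist y_def)
  also have "\<dots> = \<rho> (sG \<kappa> (\<Sum>i<d. sG (B y (w i)) (v i))) k u"
    by (simp add: rhoG_sum rhoG_scale G.scale_sum_right)
  also have "\<dots> = \<rho> (sG \<kappa> y) k u" by (simp flip: expand_v)
  finally show ?thesis by (simp add: y_def)
qed

lemma stepC4:
  "(\<Sum>i<d. sM (\<kappa> * B (br x (v i) + sG c (v i)) a) (\<rho> (w i) k u))
   = \<rho> (sG \<kappa> (sG c a - br x a)) k u"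
proof -
  define y where "y = sG c a - br x a"
  have "(\<Sum>i<d. sM (\<kappa> * B (br x (v i) + sG c (v i)) a) (\<rho> (w i) k u))
      = (\<Sum>i<d. sM (\<kappa> * B y (v i)) (\<rho> (w i) k u))"
    by (simp add: B_twist y_def)
  also have "\<dots> = \<rho> (sG \<kappa> (\<Sum>i<d. sG (B y (v i)) (w i))) k u"
    by (simp add: rhoG_sum rhoG_scale G.scale_sum_right)
  also have "\<dots> = \<rho> (sG \<kappa> y) k u" by (simp flip: expand_w)
  finally show ?thesis by (simp add: y_def)
qed

lemma stepD:
  "(\<Sum>i<d. \<rho> (br (br x (v i)) (w i)) (-1) (\<rho> a n u) - \<rho> a n (\<rho> (br (br x (v i)) (w i)) (-1) u))
   = sM (2 * hv) (\<rho> (br x a) (n - 1) u) + (if n = 1 then sM (\<kappa> * (- 2 * hv) * B x a) u else 0)"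
proof -
  define Y where "Y i = br (br x (v i)) (w i)" for i
  have SY: "(\<Sum>i<d. Y i) = sG (2 * hv) x" unfolding Y_def by (rule casimir)
  have e: "(-1 = - n) \<longleftrightarrow> n = 1" by auto
  have "(\<Sum>i<d. \<rho> (Y i) (-1) (\<rho> a n u) - \<rho> a n (\<rho> (Y i) (-1) u))
      = (\<Sum>i<d. \<rho> (br (Y i) a) (n - 1) u + sM (if n = 1 then \<kappa> * B (br x (Y i) + sG (of_int (- 1)) (Y i)) a else 0) u)"
    unfolding rel e by simp
  also have "\<dots> = \<rho> (br (\<Sum>i<d. Y i) a) (n - 1) u
     + sM (if n = 1 then \<kappa> * B (br x (\<Sum>i<d. Y i) + sG (of_int (- 1)) (\<Sum>i<d. Y i)) a else 0) u"
    by (cases "n = 1")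
       (simp_all add: sum.distrib rhoG_sum brR_sum brL_sum G.scale_sum_right BR_sum BR_add
         sum_distrib_left M.scale_sum_left[symmetric] BR_diff BR_neg sum_subtractf sum_negf right_diff_distrib)
  also have "\<dots> = sM (2 * hv) (\<rho> (br x a) (n - 1) u) + (if n = 1 then sM (\<kappa> * (- 2 * hv) * B x a) u else 0)"
    by (simp add: SY brR_scale brL_scale br_self rhoG_scale BR_scale BR_neg)
  finally show ?thesis unfolding Y_def .
qed

lemma final_alg:
  "sM (of_int n * (- 2 * hv)) P + sM \<kappa> (sM (- of_int n) P - Q) + sM \<kappa> (sM (- of_int n) P - Q) - sM (2 * hv) Q
   = sM (2 * (\<kappa> + hv)) (sM (- of_int n) P - Q)"
proof -
  have g: "\<And>a1 b1 q1 r1 :: 'm. a1 + (b1 - q1) + (b1 - q1) - r1 = (a1 + b1 + b1) - (q1 + q1 + r1)"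
    by (simp add: algebra_simps)
  have l: "sM (of_int n * (- 2 * hv)) P + sM \<kappa> (sM (- of_int n) P - Q) + sM \<kappa> (sM (- of_int n) P - Q) - sM (2 * hv) Q
    = sM (of_int n * (- 2 * hv) + \<kappa> * (- of_int n) + \<kappa> * (- of_int n)) P - sM (\<kappa> + \<kappa> + 2 * hv) Q"
    unfolding M.scale_right_diff_distrib M.scale_scale g M.scale_left_distrib ..
  have r: "sM (2 * (\<kappa> + hv)) (sM (- of_int n) P - Q) = sM (2 * (\<kappa> + hv) * (- of_int n)) P - sM (2 * (\<kappa> + hv)) Q"
    by (simp add: M.scale_right_diff_distrib)
  have c1: "of_int n * (- 2 * hv) + \<kappa> * (- of_int n) + \<kappa> * (- of_int n) = 2 * (\<kappa> + hv) * (- of_int n)"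
    by (simp add: algebra_simps)
  have c2: "\<kappa> + \<kappa> + 2 * hv = 2 * (\<kappa> + hv)" by simp
  show ?thesis unfolding l r c1 c2 ..
qed

lemma main_loc:
  "sugawara br x hv \<kappa> sM \<rho> d v w (-1) (\<rho> a n u) - \<rho> a n (sugawara br x hv \<kappa> sM \<rho> d v w (-1) u)
   = sM (- of_int n) (\<rho> a (n - 1) u) - \<rho> (br x a) (n - 1) u"
proof -
  define SS where "SS u' = (\<Sum>i<d. Sum_any (\<lambda>m. nord \<rho> (v i) m (w i) (-1 - m) u'))" for u'
  define YY where "YY u' = (\<Sum>i<d. \<rho> (br (br x (v i)) (w i)) (-1) u')" for u'
  define c where "c = 1 / (2 * (\<kappa> + hv))"
  define P where "P = \<rho> a (n - 1) u"
  define Q where "Q = \<rho> (br x a) (n - 1) u"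
  define R where "R = (if n = 1 then sM (\<kappa> * (- 2 * hv) * B x a) u else 0)"
  have sug: "sugawara br x hv \<kappa> sM \<rho> d v w (-1) u' = sM c (SS u' - YY u')" for u'
    unfolding sugawara_def SS_def YY_def c_def ..
  have L: "sugawara br x hv \<kappa> sM \<rho> d v w (-1) (\<rho> a n u) - \<rho> a n (sugawara br x hv \<kappa> sM \<rho> d v w (-1) u)
     = sM c ((SS (\<rho> a n u) - \<rho> a n (SS u)) - (YY (\<rho> a n u) - \<rho> a n (YY u)))"
    unfolding sug by (simp add: rho_scale rho_diff M.scale_right_diff_distrib algebra_simps)
  have rk: "\<rho> (sG \<kappa> (sG (of_int (- n)) a - br x a)) (n - 1) u = sM \<kappa> (sM (- of_int n) P - Q)"
    by (simp add: rhoG_scale rhoG_diff rhoG_neg P_def Q_def)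
  have T: "SS (\<rho> a n u) - \<rho> a n (SS u)
     = sM (of_int n * (- 2 * hv)) P + R + sM \<kappa> (sM (- of_int n) P - Q) + sM \<kappa> (sM (- of_int n) P - Q)"
  proof -
    have "SS (\<rho> a n u) - \<rho> a n (SS u) = (\<Sum>i<d. Sum_any (\<lambda>m. nord \<rho> (v i) m (w i) (-1 - m) (\<rho> a n u))
        - \<rho> a n (Sum_any (\<lambda>m. nord \<rho> (v i) m (w i) (-1 - m) u)))"
      unfolding SS_def by (simp add: rho_sum sum_subtractf)
    also have "\<dots> = ((\<Sum>i<d. Sum_any (\<lambda>m. nord \<rho> (v i) m (br (w i) a) (n - 1 - m) u))
        + (\<Sum>i<d. Sum_any (\<lambda>m. nord \<rho> (br (v i) a) m (w i) (n - 1 - m) u)))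
      + (\<Sum>i<d. sM (of_int n) (\<rho> (br (br (v i) a) (w i)) (n - 1) u))
      + (\<Sum>i<d. (if n = 1 then sM (\<kappa> * B (br x (br (v i) a)) (w i)) u else 0))
      + (\<Sum>i<d. sM (\<kappa> * B (br x (w i) + sG (of_int (-n)) (w i)) a) (\<rho> (v i) (n - 1) u))
      + (\<Sum>i<d. sM (\<kappa> * B (br x (v i) + sG (of_int (-n)) (v i)) a) (\<rho> (w i) (n - 1) u))"
      by (simp only: stepA sum.distrib)
    also have "\<dots> = sM (of_int n * (- 2 * hv)) P + R + sM \<kappa> (sM (- of_int n) P - Q) + sM \<kappa> (sM (- of_int n) P - Q)"
      unfolding stepB stepC1 stepC2 stepC3 stepC4 rk by (simp add: P_def R_def)
    finally show ?thesis .
  qed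
  have D: "YY (\<rho> a n u) - \<rho> a n (YY u) = sM (2 * hv) Q + R"
    unfolding YY_def Q_def R_def by (simp add: rho_sum sum_subtractf[symmetric] stepD)
  have "sM c ((SS (\<rho> a n u) - \<rho> a n (SS u)) - (YY (\<rho> a n u) - \<rho> a n (YY u)))
      = sM c (sM (2 * (\<kappa> + hv)) (sM (- of_int n) P - Q))"
    unfolding T D final_alg[symmetric] by (simp add: algebra_simps)
  also have "\<dots> = sM (- of_int n) P - Q"
  proof -
    have "2 * (\<kappa> + hv) \<noteq> 0" by (metis kh mult_eq_0_iff zero_neq_numeral)
    then have "c * (2 * (\<kappa> + hv)) = 1" by (simp add: c_def)
    then show ?thesis by (simp only: M.scale_scale M.scale_one)
  qed
  finally show ?thesis unfolding L P_def Q_def .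
qed

end

theorem mainTheorem2:
  fixes sG :: "complex \<Rightarrow> 'g::ab_group_add \<Rightarrow> 'g"
    and br :: "'g \<Rightarrow> 'g \<Rightarrow> 'g"
    and B :: "'g \<Rightarrow> 'g \<Rightarrow> complex"
    and hv :: complex
    and d :: nat and v w :: "nat \<Rightarrow> 'g"
    and x :: 'g and \<kappa> :: complex
    and sM :: "complex \<Rightarrow> 'm::ab_group_add \<Rightarrow> 'm"
    and \<rho> :: "'g \<Rightarrow> int \<Rightarrow> 'm \<Rightarrow> 'm"
  assumes "simple_lie_algebra sG br"
    and "invariant_form sG br B"
    and "\<forall>a b. killing_form sG br a b = 2 * hv * B a b"
    and "dual_bases sG B d v w"
    and "ad_nilpotent br x"
    and "\<kappa> \<noteq> - hv"
    and "twisted_mode_module sG br B x \<kappa> sM \<rho>"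
  shows "\<forall>a n u.
     sugawara br x hv \<kappa> sM \<rho> d v w (-1) (\<rho> a n u) - \<rho> a n (sugawara br x hv \<kappa> sM \<rho> d v w (-1) u)
     = sM (- of_int n) (\<rho> a (n - 1) u) - \<rho> (br x a) (n - 1) u"
proof -
  have kh: "\<kappa> + hv \<noteq> 0"
  proof
    assume "\<kappa> + hv = 0"
    then have "\<kappa> = - hv" by (simp add: eq_neg_iff_add_eq_0)
    with assms(6) show False by simp
  qed
  have A1: "vector_space sG" "\<forall>a. Vector_Spaces.linear sG sG (br a)"
      "\<forall>b. Vector_Spaces.linear sG sG (\<lambda>a. br a b)" "\<forall>a. br a a = 0" "finite_dim_space sG"
    using assms(1) unfolding simple_lie_algebra_def lie_algebra_def by simp_all
  have A2_0: "\<forall>a. Vector_Spaces.linear sG (*) (B a)"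
    using assms(2) unfolding invariant_form_def bilinear_form_def by (elim conjE) assumption
  have A2_1: "\<forall>b. Vector_Spaces.linear sG (*) (\<lambda>a. B a b)"
    using assms(2) unfolding invariant_form_def bilinear_form_def by (elim conjE) assumption
  have A2_2: "\<forall>a b. B a b = B b a"
    using assms(2) unfolding invariant_form_def bilinear_form_def by (elim conjE) assumption
  have A2_3: "\<forall>a b c. B (br a b) c = B a (br b c)"
    using assms(2) unfolding invariant_form_def bilinear_form_def by (elim conjE) assumption
  have A2_4: "\<forall>a. (\<forall>b. B a b = 0) \<longrightarrow> a = 0"
    using assms(2) unfolding invariant_form_def bilinear_form_def by (elim conjE) assumption
  note A2 = A2_0 A2_1 A2_2 A2_3 A2_4
  have A4: "module.span sG (v ` {..<d}) = UNIV" "module.span sG (w ` {..<d}) = UNIV"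
      "\<forall>i<d. \<forall>j<d. B (v i) (w j) = (if i = j then 1 else 0)"
    using assms(4) unfolding dual_bases_def by simp_all
  have A7: "vector_space sM" "\<forall>a m. Vector_Spaces.linear sM sM (\<rho> a m)"
      "\<forall>m u. Vector_Spaces.linear sG sM (\<lambda>a. \<rho> a m u)"
      "\<forall>a b m n u. \<rho> a m (\<rho> b n u) - \<rho> b n (\<rho> a m u) =
        \<rho> (br a b) (m + n) u +
        sM (if m = - n then \<kappa> * B (br x a + sG (of_int m) a) b else 0) u"
      "\<forall>a u. \<exists>N. \<forall>m\<ge>N. \<rho> a m u = 0"
    using assms(7) unfolding twisted_mode_module_def by simp_all
  have "tw sG br B hv d v w x \<kappa> sM \<rho>"
    apply (rule tw.intro)
    using A1 A2 A4 A7 assms(3) kh by (simp_all only: simp_thms)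
  then interpret tw sG br B hv d v w x \<kappa> sM \<rho> .
  show ?thesis by (intro allI) (rule main_loc)
qed

end
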